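(* Suppose $\tau$-independent conditions $\lambda = 2c_0b'\sqrt{\frac{\log p}{n}}$ and $n\succsim k\log p$ hold, and let $0<\sigma_{\min}\le\sigma^*\le\sigma_{\max}$. Let $\widehat{\beta}_{(j_* )}$ be the output of Lepski's method described in the context. Then, with probability at least $$1 - \log_2\Big(\frac{4\sigma_{\max}}{\sigma_{\min}}\Big)\, c\exp(-c'n),$$ we have $$\|\widehat{\beta}_{(j_* )} - \beta^*\|_2 \le 18C\sigma^*\sqrt{\frac{k\log p}{n}}, \qquad \|\widehat{\beta}_{(j_* )} - \beta^*\|_1 \le 72C\sigma^* k\sqrt{\frac{\log p}{n}}.$$
   Context: Observations $\{(x_i,y_i)\}_{i=1}^n$ are i.i.d. from $y_i = x_i^T\beta^* + \epsilon_i$, with $\beta^*\in\mathbb{R}^p$ unknown, $x_i$ and $\epsilon_i$ independent, $\mathbb{E}[x_i]=0$, $\mathbb{E}[\epsilon_i]=0$, $\epsilon_i$ symmetric about $0$, $\|\beta^*\|_0\le k$ with $k<n\ll p$, and $\sigma^*:=\sqrt{\mathrm{Var}(\epsilon_i)}$. Huber loss: $\ell_\tau(u)=u^2/2$ for $|u|\le\tau$, $\tau|u|-\tau^2/2$ otherwise. Weight $w(x)=\min\{1,b/\|Bx\|_2\}$ for fixed $b>0$, $B\in\mathbb{R}^{p\times p}$, and $b':=b/\lambda_{\min}(B)$. For $\tau>0$, $\widehat\beta_\tau$ denotes a global minimizer of $\frac1n\sum_{i}\ell_\tau((x_i^T\beta-y_i)w(x_i))w(x_i)+\lambda\tau\|\beta\|_1$.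 The constants $c_0, c, c', C>0$ are such that, whenever $\lambda = 2c_0b'\sqrt{\log p/n}$, $n\succsim k\log p$ and $\tau\ge 3\sigma^*$, with probability at least $1-c\exp(-c'n)$ one has $\|\widehat\beta_\tau-\beta^*\|_2\le C\tau\sqrt{k\log p/n}$ and $\|\widehat\beta_\tau-\beta^*\|_1\le 4C\tau k\sqrt{\log p/n}$. Lepski's method: let $\sigma_j=\sigma_{\min}2^j$ and $\mathcal{J}=\{j\ge1: \sigma_{\min}\le\sigma_j<2\sigma_{\max}\}$. Let $\widehat\beta_{(j)}$ denote $\widehat\beta_\tau$ with $\tau=3\sigma_j$. Define $$j_*=\min\Big\{j\in\mathcal{J}:\ \forall i\in\mathcal{J},\, i>j:\ \|\widehat\beta_{(i)}-\widehat\beta_{(j)}\|_2\le 6C\sigma_i\sqrt{\tfrac{k\log p}{n}}\ \text{and}\ \|\widehat\beta_{(i)}-\widehat\beta_{(j)}\|_1\le 24C\sigma_i k\sqrt{\tfrac{\log p}{n}}\Big\},$$ with $j_*=\infty$ if no such index exists. *)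

theory Defs
  imports "HOL-Probability.Probability" "HOL-Analysis.Analysis"
begin

definition huber :: "real \<Rightarrow> real \<Rightarrow> real" where
  "huber \<tau> u = (if \<bar>u\<bar> \<le> \<tau> then u\<^sup>2 / 2 else \<tau> * \<bar>u\<bar> - \<tau>\<^sup>2 / 2)"

definition l1norm :: "real ^ 'p \<Rightarrow> real" where
  "l1norm v = (\<Sum>i\<in>UNIV. \<bar>v $ i\<bar>)"

definition l0norm :: "real ^ 'p \<Rightarrow> nat" where
  "l0norm v = card {i. v $ i \<noteq> 0}"

definition wgt :: "real \<Rightarrow> real ^ 'p ^ 'p \<Rightarrow> real ^ 'p \<Rightarrow> real" where
  "wgt b B x = min 1 (b / norm (B *v x))"

definition lambda_min :: "real ^ 'p ^ 'p \<Rightarrow> real" where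
  "lambda_min B = Inf {\<mu>. \<exists>v. v \<noteq> 0 \<and> B *v v = \<mu> *\<^sub>R v}"

definition huber_obj ::
  "nat \<Rightarrow> real \<Rightarrow> real ^ 'p ^ 'p \<Rightarrow> real \<Rightarrow> real \<Rightarrow> (nat \<Rightarrow> real ^ 'p) \<Rightarrow> (nat \<Rightarrow> real)
     \<Rightarrow> real ^ 'p \<Rightarrow> real" where
  "huber_obj n b B lam \<tau> xs ys \<beta> =
     (1 / real n) * (\<Sum>i<n. huber \<tau> ((xs i \<bullet> \<beta> - ys i) * wgt b B (xs i)) * wgt b B (xs i))
     + lam * \<tau> * l1norm \<beta>"

definition lepski_J :: "real \<Rightarrow> real \<Rightarrow> nat set" where
  "lepski_J smin smax = {j. j \<ge> 1 \<and> smin \<le> smin * 2 ^ j \<and> smin * 2 ^ j < 2 * smax}"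

definition lepski_ok ::
  "real \<Rightarrow> real \<Rightarrow> real \<Rightarrow> nat \<Rightarrow> nat \<Rightarrow> nat \<Rightarrow> (nat \<Rightarrow> real ^ 'p) \<Rightarrow> nat \<Rightarrow> bool" where
  "lepski_ok smin smax C k n p bh j \<longleftrightarrow>
     j \<in> lepski_J smin smax \<and>
     (\<forall>i\<in>lepski_J smin smax. i > j \<longrightarrow>
        norm (bh i - bh j) \<le> 6 * C * (smin * 2 ^ i) * sqrt (real k * ln (real p) / real n) \<and>
        l1norm (bh i - bh j) \<le> 24 * C * (smin * 2 ^ i) * real k * sqrt (ln (real p) / real n))"

text \<open>Lepski's index j_*; None encodes j_* = infinity.\<close>
definition lepski_index ::
  "real \<Rightarrow> real \<Rightarrow> real \<Rightarrow> nat \<Rightarrow> nat \<Rightarrow> nat \<Rightarrow> (nat \<Rightarrow> real ^ 'p) \<Rightarrow> nat option" where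
  "lepski_index smin smax C k n p bh =
     (if \<exists>j. lepski_ok smin smax C k n p bh j
      then Some (LEAST j. lepski_ok smin smax C k n p bh j) else None)"

end

theory Submission
  imports Defs
begin

lemma l1norm_meas[measurable]:
  fixes f :: "'a \<Rightarrow> real ^ 'p"
  assumes [measurable]: "f \<in> borel_measurable M"
  shows "(\<lambda>x. l1norm (f x)) \<in> borel_measurable M"
proof -
  have "l1norm \<in> borel_measurable (borel :: (real ^ 'p) measure)"
    unfolding l1norm_def[abs_def]
    by (intro borel_measurable_continuous_onI continuous_intros)
  from measurable_compose[OF assms this] show ?thesis by (simp add: o_def)
qed

lemma l1norm_tri: "l1norm (a - b) \<le> l1norm a + l1norm (b :: real ^ 'p)"
  unfolding l1norm_def
  by (simp add: sum.distrib[symmetric] sum_mono abs_triangle_ineq4)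

lemma l1norm_commute: "l1norm (a - b) = l1norm (b - (a :: real ^ 'p))"
  unfolding l1norm_def by (simp add: abs_minus_commute)


lemma idx_some:
  "lepski_index a b C k n p bh = Some j \<longleftrightarrow>
     lepski_ok a b C k n p bh j \<and> (\<forall>j'<j. \<not> lepski_ok a b C k n p bh j')"
proof
  assume h: "lepski_index a b C k n p bh = Some j"
  then have ex: "\<exists>j. lepski_ok a b C k n p bh j" by (auto simp: lepski_index_def split: if_splits)
  with h have j: "j = (LEAST j. lepski_ok a b C k n p bh j)" by (simp add: lepski_index_def)
  show "lepski_ok a b C k n p bh j \<and> (\<forall>j'<j. \<not> lepski_ok a b C k n p bh j')"
    using ex j by (metis LeastI not_less_Least)
next
  assume h: "lepski_ok a b C k n p bh j \<and> (\<forall>j'<j. \<not> lepski_ok a b C k n p bh j')"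
  then have "(LEAST j. lepski_ok a b C k n p bh j) = j"
    by (intro Least_equality) (auto simp: not_less[symmetric])
  with h show "lepski_index a b C k n p bh = Some j" by (auto simp: lepski_index_def)
qed

theorem theorem2:
  fixes M :: "'a measure"
    and x :: "nat \<Rightarrow> 'a \<Rightarrow> real ^ 'p"
    and eps y :: "nat \<Rightarrow> 'a \<Rightarrow> real"
    and beta_star :: "real ^ 'p"
    and betahat :: "real \<Rightarrow> 'a \<Rightarrow> real ^ 'p"
    and B :: "real ^ 'p ^ 'p"
    and n k :: nat
    and b lam c0 c c' C sigma_star sigma_min sigma_max :: real
  assumes M: "prob_space M"
    \<comment> \<open>data model: i.i.d. pairs (x_i, eps_i), y_i = x_i^T beta* + eps_i\<close>
    and x_meas: "\<And>i. x i \<in> borel_measurable M"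
    and eps_meas: "\<And>i. eps i \<in> borel_measurable M"
    and y_def: "\<And>i \<omega>. y i \<omega> = x i \<omega> \<bullet> beta_star + eps i \<omega>"
    and iid_indep: "prob_space.indep_vars M (\<lambda>_. borel) (\<lambda>i \<omega>. (x i \<omega>, eps i \<omega>)) {..<n}"
    and iid_dist: "\<And>i. distr M borel (\<lambda>\<omega>. (x i \<omega>, eps i \<omega>)) = distr M borel (\<lambda>\<omega>. (x 0 \<omega>, eps 0 \<omega>))"
    and x_eps_indep: "\<And>i. distr M (borel \<Otimes>\<^sub>M borel) (\<lambda>\<omega>. (x i \<omega>, eps i \<omega>))
               = distr M borel (x i) \<Otimes>\<^sub>M distr M borel (eps i)"
    and x_int: "\<And>i. integrable M (x i)"
    and x_mean: "\<And>i. integral\<^sup>L M (x i) = 0"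
    and eps_sq_int: "\<And>i. integrable M (\<lambda>\<omega>. (eps i \<omega>)\<^sup>2)"
    and eps_mean: "\<And>i. integral\<^sup>L M (eps i) = 0"
    and eps_sym: "\<And>i. distr M borel (eps i) = distr M borel (\<lambda>\<omega>. - eps i \<omega>)"
    and sigma_star_def: "sigma_star = sqrt (integral\<^sup>L M (\<lambda>\<omega>. (eps 0 \<omega> - integral\<^sup>L M (eps 0))\<^sup>2))"
    and sparse: "l0norm beta_star \<le> k"
    and k_lt_n: "k < n"
    and n_lt_p: "n < CARD('p)"
    \<comment> \<open>tuning and constants\<close>
    and b_pos: "b > 0"
    and consts_pos: "c0 > 0" "c > 0" "c' > 0" "C > 0"
    and lam_def: "lam = 2 * c0 * (b / lambda_min B) * sqrt (ln (real CARD('p)) / real n)"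
    \<comment> \<open>betahat tau is a global minimizer of the penalized weighted Huber objective\<close>
    and betahat_min: "\<And>\<tau> \<omega> \<beta>. \<tau> > 0 \<Longrightarrow> \<omega> \<in> space M \<Longrightarrow>
        huber_obj n b B lam \<tau> (\<lambda>i. x i \<omega>) (\<lambda>i. y i \<omega>) (betahat \<tau> \<omega>)
          \<le> huber_obj n b B lam \<tau> (\<lambda>i. x i \<omega>) (\<lambda>i. y i \<omega>) \<beta>"
    and betahat_meas: "\<And>\<tau>. \<tau> > 0 \<Longrightarrow> betahat \<tau> \<in> borel_measurable M"
    \<comment> \<open>the single-tau guarantee from the context (under the tau-independent conditions)\<close>
    and guarantee: "\<And>\<tau>. \<tau> \<ge> 3 * sigma_star \<Longrightarrow>
        measure M {\<omega> \<in> space M.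
            norm (betahat \<tau> \<omega> - beta_star) \<le> C * \<tau> * sqrt (real k * ln (real CARD('p)) / real n) \<and>
            l1norm (betahat \<tau> \<omega> - beta_star) \<le> 4 * C * \<tau> * real k * sqrt (ln (real CARD('p)) / real n)}
          \<ge> 1 - c * exp (- c' * real n)"
    \<comment> \<open>range of the noise level\<close>
    and sig: "0 < sigma_min" "sigma_min \<le> sigma_star" "sigma_star \<le> sigma_max"
    and sig_strict: "sigma_min < sigma_max"
  shows "measure M {\<omega> \<in> space M.
            \<exists>j. lepski_index sigma_min sigma_max C k n CARD('p)
                  (\<lambda>i. betahat (3 * (sigma_min * 2 ^ i)) \<omega>) = Some j \<and>
                norm (betahat (3 * (sigma_min * 2 ^ j)) \<omega> - beta_star)
                  \<le> 18 * C * sigma_star * sqrt (real k * ln (real CARD('p)) / real n) \<and>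
                l1norm (betahat (3 * (sigma_min * 2 ^ j)) \<omega> - beta_star)
                  \<le> 72 * C * sigma_star * real k * sqrt (ln (real CARD('p)) / real n)}
         \<ge> 1 - log 2 (4 * sigma_max / sigma_min) * c * exp (- c' * real n)"
proof -
  interpret P: prob_space M by (rule M)
  define s where "s = sqrt (real k * ln (real CARD('p)) / real n)"
  define t where "t = sqrt (ln (real CARD('p)) / real n)"
  define bh where "bh = (\<lambda>j::nat. betahat (3 * (sigma_min * 2 ^ j)))"
  define J where "J = lepski_J sigma_min sigma_max"
  define G where "G = (\<lambda>j \<omega>. norm (bh j \<omega> - beta_star) \<le> C * (3 * (sigma_min * 2 ^ j)) * s \<and>
            l1norm (bh j \<omega> - beta_star) \<le> 4 * C * (3 * (sigma_min * 2 ^ j)) * real k * t)"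
  have n1: "real n \<ge> 1" using k_lt_n by simp
  have p1: "real CARD('p) \<ge> 1" using n_lt_p by simp
  have lnp: "ln (real CARD('p)) \<ge> 0" using p1 by simp
  have s0: "s \<ge> 0" unfolding s_def using n1 lnp by simp
  have t0: "t \<ge> 0" unfolding t_def using n1 lnp by simp
  have bh_meas[measurable]: "\<And>j. bh j \<in> borel_measurable M"
    unfolding bh_def using sig(1) by (intro betahat_meas) simp
  have sgpos: "\<And>j::nat. sigma_min * 2 ^ j > 0" using sig(1) by simp
  have sgmono: "\<And>i j::nat. i \<le> j \<Longrightarrow> sigma_min * 2 ^ i \<le> sigma_min * 2 ^ j"
    using sig(1) by (simp add: power_increasing)
  obtain m :: nat where m: "sigma_star / sigma_min < 2 ^ m"
    using real_arch_pow[of 2 "sigma_star / sigma_min"] by auto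
  define Q where "Q = (\<lambda>j::nat. 1 \<le> j \<and> sigma_star \<le> sigma_min * 2 ^ j)"
  have Qm: "Q (max 1 m)"
  proof -
    have "sigma_star < sigma_min * 2 ^ m" using m sig(1) by (simp add: field_simps)
    also have "\<dots> \<le> sigma_min * 2 ^ max 1 m" by (rule sgmono) simp
    finally show ?thesis unfolding Q_def by simp
  qed
  define jb where "jb = (LEAST j. Q j)"
  have Qjb: "Q jb" unfolding jb_def using Qm by (rule LeastI)
  have jb1: "1 \<le> jb" and jb_ge: "sigma_star \<le> sigma_min * 2 ^ jb" using Qjb Q_def by auto
  have jb_up: "sigma_min * 2 ^ jb \<le> 2 * sigma_star \<and> sigma_min * 2 ^ jb < 2 * sigma_max"
  proof (cases "jb = 1")
    case True then show ?thesis using sig sig_strict by simp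
  next
    case False
    then have "jb - 1 < jb" "1 \<le> jb - 1" using jb1 by auto
    then have "\<not> Q (jb - 1)" unfolding jb_def using not_less_Least by blast
    with \<open>1 \<le> jb - 1\<close> have "sigma_min * 2 ^ (jb - 1) < sigma_star" unfolding Q_def by auto
    moreover have "sigma_min * 2 ^ jb = 2 * (sigma_min * 2 ^ (jb - 1))"
      using jb1 by (metis (no_types, lifting) mult.left_commute power_eq_if False not_one_le_zero)
    ultimately show ?thesis using sig by linarith
  qed
  have jbJ: "jb \<in> J" unfolding J_def lepski_J_def
    using jb1 jb_up sig(1) by (auto simp: one_le_power)
  define L where "L = log 2 (2 * sigma_max / sigma_min)"
  have ratio: "2 * sigma_max / sigma_min > 1" using sig sig_strict by (simp add: field_simps)
  have Jsub: "J \<subseteq> {1..nat \<lfloor>L\<rfloor>}"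
  proof
    fix j assume "j \<in> J"
    then have j1: "1 \<le> j" and jlt: "sigma_min * 2 ^ j < 2 * sigma_max"
      unfolding J_def lepski_J_def by auto
    have "2 powr real j < 2 * sigma_max / sigma_min"
      using jlt sig(1) by (simp add: powr_realpow field_simps)
    then have "real j < L" unfolding L_def using ratio by (subst less_log_iff) auto
    then have "int j \<le> \<lfloor>L\<rfloor>" by linarith
    then show "j \<in> {1..nat \<lfloor>L\<rfloor>}" using j1 by auto
  qed
  have finJ: "finite J" using Jsub finite_subset by blast
  define K where "K = {j \<in> J. jb \<le> j}"
  have finK: "finite K" using finJ unfolding K_def by simp
  have L0: "L \<ge> 0" unfolding L_def using ratio by simp
  have cardK: "real (card K) \<le> log 2 (4 * sigma_max / sigma_min)"
  proof -
    have "card K \<le> card J" unfolding K_def using finJ by (intro card_mono) auto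
    also have "\<dots> \<le> card {1..nat \<lfloor>L\<rfloor>}" using Jsub by (intro card_mono) auto
    finally have "real (card K) \<le> real (nat \<lfloor>L\<rfloor>)" by simp
    also have "\<dots> \<le> L" using L0 by linarith
    also have "L \<le> log 2 (4 * sigma_max / sigma_min)" unfolding L_def
      using ratio sig sig_strict by (subst log_le_cancel_iff) (auto simp: field_simps)
    finally show ?thesis .
  qed
  define A where "A = (\<lambda>j. {\<omega> \<in> space M. G j \<omega>})"
  have A_meas: "\<And>j. A j \<in> sets M" unfolding A_def G_def by measurable
  have A_prob: "\<And>j. j \<in> K \<Longrightarrow> measure M (A j) \<ge> 1 - c * exp (- c' * real n)"
  proof -
    fix j assume "j \<in> K"
    then have "jb \<le> j" unfolding K_def by simp
    then have "sigma_star \<le> sigma_min * 2 ^ j" using jb_ge sgmono[of jb j] by linarith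
    then have "3 * (sigma_min * 2 ^ j) \<ge> 3 * sigma_star" by simp
    from guarantee[OF this] show "measure M (A j) \<ge> 1 - c * exp (- c' * real n)"
      unfolding A_def G_def bh_def s_def t_def by simp
  qed
  define E where "E = {\<omega> \<in> space M. \<forall>j\<in>K. G j \<omega>}"
  have E_prob: "measure M E \<ge> 1 - real (card K) * (c * exp (- c' * real n))"
  proof -
    have E_meas: "E \<in> sets M" unfolding E_def G_def using finK by measurable
    have "space M - E = (\<Union>j\<in>K. space M - A j)" unfolding E_def A_def by auto
    then have "measure M (space M - E) \<le> (\<Sum>j\<in>K. measure M (space M - A j))"
      using P.finite_measure_subadditive_finite[OF finK, of "\<lambda>j. space M - A j"] A_meas by auto
    also have "\<dots> = (\<Sum>j\<in>K. 1 - measure M (A j))"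
      using A_meas by (intro sum.cong refl P.prob_compl) auto
    also have "\<dots> \<le> (\<Sum>j\<in>K. c * exp (- c' * real n))"
      using A_prob by (intro sum_mono) (auto simp: algebra_simps)
    also have "\<dots> = real (card K) * (c * exp (- c' * real n))" by simp
    finally show ?thesis using P.prob_compl[OF E_meas] by linarith
  qed
  define ok where "ok = (\<lambda>j \<omega>. lepski_ok sigma_min sigma_max C k n CARD('p) (\<lambda>i. bh i \<omega>) j)"
  define goal where "goal = (\<lambda>j \<omega>. norm (bh j \<omega> - beta_star)
                  \<le> 18 * C * sigma_star * s \<and>
                l1norm (bh j \<omega> - beta_star)
                  \<le> 72 * C * sigma_star * real k * t)"
  define T where "T = {\<omega> \<in> space M.
            \<exists>j. lepski_index sigma_min sigma_max C k n CARD('p)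
                  (\<lambda>i. betahat (3 * (sigma_min * 2 ^ i)) \<omega>) = Some j \<and>
                norm (betahat (3 * (sigma_min * 2 ^ j)) \<omega> - beta_star)
                  \<le> 18 * C * sigma_star * sqrt (real k * ln (real CARD('p)) / real n) \<and>
                l1norm (betahat (3 * (sigma_min * 2 ^ j)) \<omega> - beta_star)
                  \<le> 72 * C * sigma_star * real k * sqrt (ln (real CARD('p)) / real n)}"
  have okJ: "\<And>j \<omega>. ok j \<omega> \<Longrightarrow> j \<in> J" unfolding ok_def lepski_ok_def J_def by simp
  have T_eq: "T = {\<omega> \<in> space M. \<exists>j\<in>J. ok j \<omega> \<and> (\<forall>j'\<in>{..<j}. \<not> ok j' \<omega>) \<and> goal j \<omega>}"
    unfolding T_def ok_def goal_def idx_some s_def t_def bh_def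
    using okJ[unfolded ok_def bh_def] by auto
  have T_meas: "T \<in> sets M"
    unfolding T_eq ok_def goal_def lepski_ok_def by measurable
  have ET: "E \<subseteq> T"
  proof
    fix \<omega> assume "\<omega> \<in> E"
    then have om: "\<omega> \<in> space M" and GK: "\<And>j. j \<in> K \<Longrightarrow> G j \<omega>" unfolding E_def by auto
    have Gjb: "G jb \<omega>" using GK jbJ unfolding K_def by simp
    have okjb: "ok jb \<omega>" unfolding ok_def lepski_ok_def
    proof (intro conjI ballI impI)
      show "jb \<in> lepski_J sigma_min sigma_max" using jbJ J_def by simp
    next
      fix i assume iJ: "i \<in> lepski_J sigma_min sigma_max" and ij: "jb < i"
      then have Gi: "G i \<omega>" using GK unfolding K_def J_def by simp
      have mono: "sigma_min * 2 ^ jb \<le> sigma_min * 2 ^ i" using ij sgmono by simp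
      have m1: "C * (sigma_min * 2 ^ jb) * s \<le> C * (sigma_min * 2 ^ i) * s"
        using mult_right_mono[OF mult_left_mono[OF mono, of C] s0] consts_pos by simp
      have m2: "C * (sigma_min * 2 ^ jb) * real k * t \<le> C * (sigma_min * 2 ^ i) * real k * t"
        using mult_right_mono[OF mult_right_mono[OF mult_left_mono[OF mono, of C], of "real k"] t0] consts_pos by simp
      have "norm (bh i \<omega> - bh jb \<omega>) \<le> norm (bh i \<omega> - beta_star) + norm (bh jb \<omega> - beta_star)"
        using norm_triangle_ineq4[of "bh i \<omega> - beta_star" "bh jb \<omega> - beta_star"] by simp
      then show "norm (bh i \<omega> - bh jb \<omega>) \<le> 6 * C * (sigma_min * 2 ^ i) * sqrt (real k * ln (real CARD('p)) / real n)"
        using Gi Gjb m1 unfolding G_def s_def[symmetric] by (simp add: algebra_simps)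
      have "l1norm (bh i \<omega> - bh jb \<omega>) \<le> l1norm (bh i \<omega> - beta_star) + l1norm (bh jb \<omega> - beta_star)"
        using l1norm_tri[of "bh i \<omega> - beta_star" "bh jb \<omega> - beta_star"] by simp
      then show "l1norm (bh i \<omega> - bh jb \<omega>) \<le> 24 * C * (sigma_min * 2 ^ i) * real k * sqrt (ln (real CARD('p)) / real n)"
        using Gi Gjb m2 unfolding G_def t_def[symmetric] by (simp add: algebra_simps)
    qed
    define js where "js = (LEAST j. ok j \<omega>)"
    have okjs: "ok js \<omega>" unfolding js_def using okjb by (rule LeastI)
    have jsle: "js \<le> jb" unfolding js_def using okjb by (rule Least_le)
    have notok: "\<forall>j'\<in>{..<js}. \<not> ok j' \<omega>" unfolding js_def using not_less_Least by auto
    have b1: "C * (sigma_min * 2 ^ jb) * s \<le> C * (2 * sigma_star) * s"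
      using mult_right_mono[OF mult_left_mono[OF jb_up[THEN conjunct1], of C] s0] consts_pos by simp
    have b2: "C * (sigma_min * 2 ^ jb) * real k * t \<le> C * (2 * sigma_star) * real k * t"
      using mult_right_mono[OF mult_right_mono[OF mult_left_mono[OF jb_up[THEN conjunct1], of C], of "real k"] t0] consts_pos by simp
    have b3: "C * sigma_star * s \<ge> 0" "C * sigma_star * real k * t \<ge> 0"
      using consts_pos sig s0 t0 by auto
    have "goal js \<omega>"
    proof (cases "js = jb")
      case True
      then show ?thesis using Gjb b1 b2 b3 unfolding goal_def G_def by (simp add: algebra_simps)
    next
      case False
      with jsle have lt: "js < jb" by simp
      have d1: "norm (bh jb \<omega> - bh js \<omega>) \<le> 6 * C * (sigma_min * 2 ^ jb) * s"
       and d2: "l1norm (bh jb \<omega> - bh js \<omega>) \<le> 24 * C * (sigma_min * 2 ^ jb) * real k * t"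
        using okjs jbJ lt unfolding ok_def lepski_ok_def J_def s_def t_def by auto
      have e1: "norm (bh js \<omega> - beta_star) \<le> norm (bh jb \<omega> - beta_star) + norm (bh jb \<omega> - bh js \<omega>)"
        using norm_triangle_ineq4[of "bh jb \<omega> - beta_star" "bh jb \<omega> - bh js \<omega>"] by simp
      have e2: "l1norm (bh js \<omega> - beta_star) \<le> l1norm (bh jb \<omega> - beta_star) + l1norm (bh jb \<omega> - bh js \<omega>)"
        using l1norm_tri[of "bh jb \<omega> - beta_star" "bh jb \<omega> - bh js \<omega>"] by simp
      show ?thesis using e1 e2 d1 d2 Gjb b1 b2 unfolding goal_def G_def by (simp add: algebra_simps)
    qed
    then show "\<omega> \<in> T" unfolding T_eq using om okjs notok okJ[OF okjs] by blast
  qed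
  have "measure M E \<le> measure M T" using ET T_meas by (rule P.finite_measure_mono)
  moreover have "log 2 (4 * sigma_max / sigma_min) * c * exp (- c' * real n)
      \<ge> real (card K) * (c * exp (- c' * real n))"
    using cardK consts_pos by (simp add: mult.assoc mult_right_mono)
  ultimately show ?thesis using E_prob unfolding T_def by linarith
qed

end
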